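(* Let $p$ be a prime and $n\ge1$. Let $N_n=\prod_{1\le h\le k\le n,\ \gcd(h,k)=1} h$ be the product of the numerators of all nonzero Farey fractions of order $n$ (each written in lowest terms). Then $$\mathrm{ord}_p(N_n)=\sum_{b=1}^{\lfloor\log_p n\rfloor}\ \sum_{a=1}^{\lfloor n/p^b\rfloor}\left(\varphi(ap^b)\Big(\Big\lfloor\frac{n}{ap^b}\Big\rfloor-1\Big)+\sum_{j\mid ap}\mu(j)\Big\lfloor\frac{d}{j}\Big\rfloor\right),$$ where, for each pair $(a,b)$, $d$ is the unique integer with $0\le d<ap^b$ and $d\equiv n\pmod{ap^b}$.
   Context: $\mathrm{ord}_p(m)$ is the exponent of the prime $p$ in the positive integer $m$; $\varphi$ is Euler's totient function, $\mu$ the M\"obius function, and the inner sum is over positive divisors $j$ of $ap$. *)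

theory Defs
  imports "HOL-Number_Theory.Number_Theory" "HOL-Computational_Algebra.Squarefree"
begin

definition moebius :: "nat \<Rightarrow> int" where
  "moebius j = (if squarefree j then (-1) ^ card (prime_factors j) else 0)"

definition farey_num_prod :: "nat \<Rightarrow> nat" where
  "farey_num_prod n = (\<Prod>(h, k) \<in> {(h, k). 1 \<le> h \<and> h \<le> k \<and> k \<le> n \<and> coprime h k}. h)"

end

theory Submission
  imports Defs
begin

lemma moebius_1 [simp]: "moebius (Suc 0) = 1"
  by (simp add: moebius_def)

lemma moebius_not_sqfree: "\<not> squarefree j \<Longrightarrow> moebius j = 0"
  by (simp add: moebius_def)

lemma moebius_mult_prime:
  assumes q: "prime q" and nd: "\<not> q dvd j" and j: "j > 0"
  shows "moebius (q * j) = - moebius j"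
proof -
  have cop: "coprime q j" using q nd by (simp add: prime_imp_coprime)
  have sq: "squarefree (q * j) \<longleftrightarrow> squarefree j"
    using cop q squarefree_mult_coprime squarefree_multD(2) squarefree_prime by blast
  have pf: "prime_factors (q * j) = insert q (prime_factors j)"
    using q j by (simp add: prime_factors_product prime_prime_factors)
  have nin: "q \<notin> prime_factors j" using nd by auto
  show ?thesis using sq pf nin by (simp add: moebius_def)
qed

lemma moebius_sum:
  fixes g :: nat
  assumes g: "g > 0"
  shows "(\<Sum>j | j dvd g. moebius j) = (if g = 1 then 1 else 0)"
proof (cases "g = 1")
  case True
  then show ?thesis by simp
next
  case False
  then obtain q where q: "prime q" "q dvd g" using prime_factor_nat by blast
  define D0 where "D0 = {j. j dvd g \<and> \<not> q dvd j}"
  have fin: "finite {j. j dvd g}" using g by simp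
  have finD0: "finite D0" unfolding D0_def using fin by (rule rev_finite_subset) auto
  have qpos: "q > 0" using q prime_gt_0_nat by blast
  have img_sub: "(\<lambda>j. q * j) ` D0 \<subseteq> {j. j dvd g}"
  proof
    fix x assume "x \<in> (\<lambda>j. q * j) ` D0"
    then obtain j where x: "x = q * j" and j: "j dvd g" "\<not> q dvd j" by (auto simp: D0_def)
    have "coprime q j" using q j by (simp add: prime_imp_coprime)
    then show "x \<in> {j. j dvd g}" using x j q by (simp add: divides_mult)
  qed
  have "(\<Sum>j | j dvd g. moebius j) = (\<Sum>j \<in> D0 \<union> (\<lambda>j. q * j) ` D0. moebius j)"
  proof (rule sum.mono_neutral_right[OF fin])
    show "D0 \<union> (\<lambda>j. q * j) ` D0 \<subseteq> {j. j dvd g}" using img_sub by (auto simp: D0_def)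
    show "\<forall>i\<in>{j. j dvd g} - (D0 \<union> (\<lambda>j. q * j) ` D0). moebius i = 0"
    proof
      fix i assume i: "i \<in> {j. j dvd g} - (D0 \<union> (\<lambda>j. q * j) ` D0)"
      then have "q dvd i" "i dvd g" by (auto simp: D0_def)
      then obtain i' where i': "i = q * i'" by blast
      have "i' dvd g" using i' \<open>i dvd g\<close> by (metis dvd_mult_right)
      then have "q dvd i'" using i i' by (auto simp: D0_def)
      then have "q * q dvd i" using i' by simp
      then have "\<not> squarefree i" using q
        by (metis not_prime_unit power2_eq_square squarefree_def)
      then show "moebius i = 0" by (rule moebius_not_sqfree)
    qed
  qed
  also have "\<dots> = (\<Sum>j \<in> D0. moebius j) + (\<Sum>j \<in> (\<lambda>j. q * j) ` D0. moebius j)"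
    by (rule sum.union_disjoint) (use finD0 in \<open>auto simp: D0_def\<close>)
  also have "(\<Sum>j \<in> (\<lambda>j. q * j) ` D0. moebius j) = (\<Sum>j \<in> D0. moebius (q * j))"
    by (rule sum.reindex_cong[where l="\<lambda>j. q * j"]) (use qpos in \<open>auto simp: inj_on_def\<close>)
  also have "\<dots> = (\<Sum>j \<in> D0. - moebius j)"
  proof (rule sum.cong[OF refl])
    fix j assume "j \<in> D0"
    then have "j dvd g" "\<not> q dvd j" by (auto simp: D0_def)
    then have "j > 0" using g by (metis dvd_0_left_iff gr0I not_gr0)
    then show "moebius (q * j) = - moebius j" using moebius_mult_prime q \<open>\<not> q dvd j\<close> by blast
  qed
  finally show ?thesis using False by (simp add: sum_negf)
qed

definition C :: "nat \<Rightarrow> nat \<Rightarrow> int" where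
  "C m x = (\<Sum>k\<in>{1..x}. if coprime k m then 1 else 0)"

lemma int_Suc_div:
  assumes "j > (0::nat)"
  shows "int (Suc x div j) = int (x div j) + (if j dvd Suc x then 1 else 0)"
  using assms by (simp add: div_Suc dvd_eq_mod_eq_0)

lemma count_formula:
  assumes m: "m > 0"
  shows "C m x = (\<Sum>j | j dvd m. moebius j * int (x div j))"
proof (induction x)
  case 0
  then show ?case by (simp add: C_def)
next
  case (Suc x)
  have fin: "finite {j. j dvd m}" using m by simp
  have "(\<Sum>j | j dvd m. moebius j * int (Suc x div j))
      = (\<Sum>j | j dvd m. moebius j * int (x div j) + (if j dvd Suc x then moebius j else 0))"
  proof (rule sum.cong[OF refl])
    fix j assume "j \<in> {j. j dvd m}"
    then have "j > 0" using m by (metis dvd_0_left_iff gr0I mem_Collect_eq not_gr0)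
    then show "moebius j * int (Suc x div j) = moebius j * int (x div j) + (if j dvd Suc x then moebius j else 0)"
      by (simp add: int_Suc_div algebra_simps)
  qed
  also have "\<dots> = (\<Sum>j | j dvd m. moebius j * int (x div j)) + (\<Sum>j | j dvd m. if j dvd Suc x then moebius j else 0)"
    by (rule sum.distrib)
  also have "(\<Sum>j | j dvd m. if j dvd Suc x then moebius j else 0) = (\<Sum>j \<in> {j \<in> {j. j dvd m}. j dvd Suc x}. moebius j)"
    by (rule sum.inter_filter[symmetric, OF fin])
  also have "{j \<in> {j. j dvd m}. j dvd Suc x} = {j. j dvd gcd (Suc x) m}" by auto
  also have "(\<Sum>j | j dvd gcd (Suc x) m. moebius j) = (if coprime (Suc x) m then 1 else 0)"
  proof -
    have "gcd (Suc x) m > 0" by simp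
    then have "(\<Sum>j | j dvd gcd (Suc x) m. moebius j) = (if gcd (Suc x) m = 1 then 1 else 0)"
      by (rule moebius_sum)
    then show ?thesis by (simp only: coprime_iff_gcd_eq_1)
  qed
  finally have eq: "(\<Sum>j | j dvd m. moebius j * int (Suc x div j)) = (\<Sum>j | j dvd m. moebius j * int (x div j)) + (if coprime (Suc x) m then 1 else 0)" .
  have "C m (Suc x) = C m x + (if coprime (Suc x) m then 1 else 0)"
    unfolding C_def by (simp add: sum.cl_ivl_Suc)
  then show ?case using Suc eq by simp
qed

lemma C_totient: "C m m = int (totient m)"
proof -
  have "C m m = int (card {k\<in>{1..m}. coprime k m})"
    unfolding C_def by (simp add: sum.inter_filter[symmetric])
  also have "{k\<in>{1..m}. coprime k m} = totatives m" by (auto simp: totatives_def)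
  finally show ?thesis by (simp add: totient_def)
qed

lemma C_add_m:
  assumes m: "m > 0"
  shows "C m (x + m) = C m x + C m m"
proof -
  have "C m (x + m) = (\<Sum>j | j dvd m. moebius j * int (x div j) + moebius j * int (m div j))"
  proof -
    have "C m (x + m) = (\<Sum>j | j dvd m. moebius j * int ((x + m) div j))" by (rule count_formula[OF m])
    also have "\<dots> = (\<Sum>j | j dvd m. moebius j * int (x div j) + moebius j * int (m div j))"
      by (rule sum.cong[OF refl]) (simp add: div_plus_div_distrib_dvd_right distrib_left)
    finally show ?thesis .
  qed
  also have "\<dots> = C m x + C m m"
    by (simp only: sum.distrib count_formula[OF m])
  finally show ?thesis .
qed

lemma C_period:
  assumes m: "m > 0"
  shows "C m (q * m + d) = int q * C m m + C m d"
proof (induction q)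
  case 0 then show ?case by simp
next
  case (Suc q)
  have "C m (Suc q * m + d) = C m ((q * m + d) + m)" by (simp add: algebra_simps)
  also have "\<dots> = C m (q * m + d) + C m m" by (rule C_add_m[OF m])
  finally show ?case using Suc by (simp add: algebra_simps)
qed

lemma C_cong:
  assumes "b > 0"
  shows "C (a * p ^ b) x = C (a * p) x"
proof -
  have "\<And>k. coprime k (a * p ^ b) = coprime k (a * p)" using assms by simp
  then show ?thesis unfolding C_def by presburger
qed


lemma term_count:
  fixes p a b n :: nat
  assumes p: "prime p" and a: "a \<ge> 1" and b: "b \<ge> 1" and mn: "a * p ^ b \<le> n"
  shows "int (card {k. a * p ^ b \<le> k \<and> k \<le> n \<and> coprime (a * p ^ b) k}) =
    (let d = n mod (a * p ^ b) in
         int (totient (a * p ^ b)) * (int (n div (a * p ^ b)) - 1)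
         + (\<Sum>j \<in> {j. j dvd a * p}. moebius j * int (d div j)))"
proof -
  define m where "m = a * p ^ b"
  define q where "q = n div m"
  define d where "d = n mod m"
  have p2: "p \<ge> 2" using p prime_ge_2_nat by blast
  have "p ^ 1 \<le> p ^ b" using p2 b by (intro power_increasing) auto
  then have "p ^ b \<ge> 2" using p2 by simp
  then have m2: "m \<ge> 2" unfolding m_def using a
    by (metis dual_order.trans mult_1 mult_le_mono1)
  have mpos: "m > 0" using m2 by simp
  have ncop: "\<not> coprime m m" using m2 by simp
  have set_eq: "{k. m \<le> k \<and> k \<le> n \<and> coprime m k} = {k\<in>{m<..n}. coprime k m}"
    using ncop by (auto simp: le_less coprime_commute)
  have "C m n = (\<Sum>k\<in>{1..m} \<union> {m<..n}. if coprime k m then 1 else 0)"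
  proof -
    have "{1..n} = {1..m} \<union> {m<..n}" using mn m2 unfolding m_def[symmetric] by auto
    then show ?thesis unfolding C_def by simp
  qed
  also have "\<dots> = C m m + (\<Sum>k\<in>{m<..n}. if coprime k m then 1 else 0)"
    unfolding C_def by (rule sum.union_disjoint) auto
  also have "(\<Sum>k\<in>{m<..n}. if coprime k m then (1::int) else 0) = int (card {k\<in>{m<..n}. coprime k m})"
    by (simp add: sum.inter_filter[symmetric])
  finally have c1: "int (card {k. m \<le> k \<and> k \<le> n \<and> coprime m k}) = C m n - C m m"
    using set_eq by simp
  have "n = q * m + d" unfolding q_def d_def by simp
  then have "C m n = int q * C m m + C m d" using C_period[OF mpos] by metis
  moreover have "C m d = C (a * p) d" unfolding m_def using C_cong b by simp
  moreover have "C (a * p) d = (\<Sum>j | j dvd a * p. moebius j * int (d div j))"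
    by (rule count_formula) (use a p2 in simp)
  ultimately have "int (card {k. m \<le> k \<and> k \<le> n \<and> coprime m k}) =
      int (totient m) * (int q - 1) + (\<Sum>j | j dvd a * p. moebius j * int (d div j))"
    using c1 C_totient[of m] by (simp add: algebra_simps)
  then show ?thesis unfolding m_def q_def d_def Let_def by simp
qed

lemma mult_le_B:
  fixes p h n :: nat
  assumes p: "prime p" and h: "1 \<le> h" "h \<le> n"
  shows "multiplicity p h \<le> nat \<lfloor>log (real p) (real n)\<rfloor>"
proof -
  define e where "e = multiplicity p h"
  have "p ^ e dvd h" unfolding e_def by (rule multiplicity_dvd)
  then have "p ^ e \<le> n" using h by (meson dvd_imp_le le_trans less_le_trans zero_less_one)
  then have "real p powr real e \<le> real n" using p
    by (metis of_nat_le_iff of_nat_power powr_realpow prime_gt_0_nat of_nat_0_less_iff)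
  then have "real e \<le> log (real p) (real n)" using p h
    by (subst le_log_iff) (use prime_gt_1_nat[OF p] h in auto)
  then have "int e \<le> \<lfloor>log (real p) (real n)\<rfloor>" by (simp add: le_floor_iff)
  then show ?thesis unfolding e_def by linarith
qed

lemma mult_as_sum:
  fixes p h n :: nat
  assumes p: "prime p" and h: "1 \<le> h" "h \<le> n"
  shows "multiplicity p h = (\<Sum>b = 1..nat \<lfloor>log (real p) (real n)\<rfloor>. if p ^ b dvd h then 1 else 0)"
proof -
  define B where "B = nat \<lfloor>log (real p) (real n)\<rfloor>"
  define e where "e = multiplicity p h"
  have eB: "e \<le> B" unfolding e_def B_def by (rule mult_le_B[OF p h])
  have hne: "h \<noteq> 0" using h by simp
  have nu: "\<not> is_unit p" using p not_prime_unit by blast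
  have iff: "p ^ b dvd h \<longleftrightarrow> b \<le> e" for b
    unfolding e_def by (rule power_dvd_iff_le_multiplicity[OF hne nu])
  have "{b\<in>{1..B}. p ^ b dvd h} = {1..e}" using eB by (auto simp: iff)
  then have "(\<Sum>b = 1..B. if p ^ b dvd h then 1 else 0) = card {1..e}"
    by (simp add: sum.inter_filter[symmetric])
  then show ?thesis unfolding B_def e_def by simp
qed


lemma set_eq_sigma:
  fixes P n :: nat
  assumes ppos: "P > 0"
  shows "{x\<in>{(h, k). 1 \<le> h \<and> h \<le> k \<and> k \<le> n \<and> coprime h k}. P dvd fst x} =
    Sigma ((\<lambda>a. a * P) ` {1..n div P}) (\<lambda>h. {k. h \<le> k \<and> k \<le> n \<and> coprime h k})"
proof (rule Set.set_eqI, rule iffI)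
  fix x assume x: "x \<in> {x\<in>{(h, k). 1 \<le> h \<and> h \<le> k \<and> k \<le> n \<and> coprime h k}. P dvd fst x}"
  obtain h k where hk: "x = (h, k)" by force
  have h: "1 \<le> h" "h \<le> k" "k \<le> n" "coprime h k" "P dvd h"
    using x hk by auto
  then obtain a where a: "h = a * P" by (metis dvdE mult.commute)
  have "a \<ge> 1" using a h(1) by (cases a) auto
  moreover have "a \<le> n div P" using a h ppos
    by (simp add: less_eq_div_iff_mult_less_eq)
  ultimately show "x \<in> Sigma ((\<lambda>a. a * P) ` {1..n div P}) (\<lambda>h. {k. h \<le> k \<and> k \<le> n \<and> coprime h k})"
    using hk h a by auto
next
  fix x assume x: "x \<in> Sigma ((\<lambda>a. a * P) ` {1..n div P}) (\<lambda>h. {k. h \<le> k \<and> k \<le> n \<and> coprime h k})"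
  then obtain h k where hk: "x = (h, k)" "h \<in> (\<lambda>a. a * P) ` {1..n div P}" "h \<le> k" "k \<le> n" "coprime h k"
    by auto
  obtain a where a0: "a \<in> {1..n div P}" "h = a * P" using hk(2) by blast
  then have a: "h = a * P" "1 \<le> a" by auto
  have "1 \<le> h" using a ppos by simp
  then show "x \<in> {x\<in>{(h, k). 1 \<le> h \<and> h \<le> k \<and> k \<le> n \<and> coprime h k}. P dvd fst x}"
    using hk a by auto
qed

lemma mult_farey:
  fixes p n :: nat
  assumes p: "prime p"
  shows "multiplicity p (farey_num_prod n) =
    (\<Sum>b = 1..nat \<lfloor>log (real p) (real n)\<rfloor>. \<Sum>a = 1..n div p ^ b.
        card {k. a * p ^ b \<le> k \<and> k \<le> n \<and> coprime (a * p ^ b) k})"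
proof -
  define B where "B = nat \<lfloor>log (real p) (real n)\<rfloor>"
  define S where "S = {(h, k). 1 \<le> h \<and> h \<le> k \<and> k \<le> n \<and> coprime h k}"
  have finS: "finite S"
    by (rule finite_subset[of _ "{1..n} \<times> {1..n}"]) (auto simp: S_def)
  have "multiplicity p (farey_num_prod n) = multiplicity p (\<Prod>x\<in>S. fst x)"
    unfolding farey_num_prod_def S_def by (simp add: case_prod_beta')
  also have "\<dots> = (\<Sum>x\<in>S. multiplicity p (fst x))"
    by (rule prime_elem_multiplicity_prod_distrib) (use p finS in \<open>auto simp: S_def\<close>)
  also have "\<dots> = (\<Sum>x\<in>S. \<Sum>b = 1..B. if p ^ b dvd fst x then 1 else 0)"
  proof (rule sum.cong[OF refl])
    fix x assume "x \<in> S"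
    then have "1 \<le> fst x" "fst x \<le> n" by (auto simp: S_def)
    then show "multiplicity p (fst x) = (\<Sum>b = 1..B. if p ^ b dvd fst x then 1 else 0)"
      unfolding B_def by (rule mult_as_sum[OF p])
  qed
  also have "\<dots> = (\<Sum>b = 1..B. \<Sum>x\<in>S. if p ^ b dvd fst x then 1 else 0)"
    by (rule sum.swap)
  also have "\<dots> = (\<Sum>b = 1..B. \<Sum>a = 1..n div p ^ b.
        card {k. a * p ^ b \<le> k \<and> k \<le> n \<and> coprime (a * p ^ b) k})"
  proof (rule sum.cong[OF refl])
    fix b assume "b \<in> {1..B}"
    have ppos: "p ^ b > 0" using p by (simp add: prime_gt_0_nat)
    define T where "T = (\<lambda>h. {k. h \<le> k \<and> k \<le> n \<and> coprime h k})"
    have "(\<Sum>x\<in>S. if p ^ b dvd fst x then 1 else 0) = card {x\<in>S. p ^ b dvd fst x}"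
      using finS by (simp add: sum.inter_filter[symmetric])
    also have "{x\<in>S. p ^ b dvd fst x} = Sigma ((\<lambda>a. a * p ^ b) ` {1..n div p ^ b}) T"
      unfolding S_def T_def by (rule set_eq_sigma[OF ppos])
    also have "card (Sigma ((\<lambda>a. a * p ^ b) ` {1..n div p ^ b}) T) =
        (\<Sum>h\<in>(\<lambda>a. a * p ^ b) ` {1..n div p ^ b}. card (T h))"
      by (rule card_SigmaI) (auto simp: T_def)
    also have "\<dots> = (\<Sum>a = 1..n div p ^ b. card (T (a * p ^ b)))"
      by (rule sum.reindex_cong[where l="\<lambda>a. a * p ^ b"]) (use ppos in \<open>auto simp: inj_on_def\<close>)
    finally show "(\<Sum>x\<in>S. if p ^ b dvd fst x then 1 else 0) = (\<Sum>a = 1..n div p ^ b.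
        card {k. a * p ^ b \<le> k \<and> k \<le> n \<and> coprime (a * p ^ b) k})"
      by (simp add: T_def)
  qed
  finally show ?thesis unfolding B_def .
qed

theorem lemma4p3:
  fixes p n :: nat
  assumes "prime p" and "n \<ge> 1"
  shows "int (multiplicity p (farey_num_prod n)) =
    (\<Sum>b = 1..nat \<lfloor>log (real p) (real n)\<rfloor>.
       \<Sum>a = 1..n div p ^ b.
         let d = n mod (a * p ^ b) in
         int (totient (a * p ^ b)) * (int (n div (a * p ^ b)) - 1)
         + (\<Sum>j \<in> {j. j dvd a * p}. moebius j * int (d div j)))"
proof -
  have "int (multiplicity p (farey_num_prod n)) =
    (\<Sum>b = 1..nat \<lfloor>log (real p) (real n)\<rfloor>. \<Sum>a = 1..n div p ^ b.
        int (card {k. a * p ^ b \<le> k \<and> k \<le> n \<and> coprime (a * p ^ b) k}))"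
    unfolding mult_farey[OF assms(1)] of_nat_sum ..
  also have "\<dots> = (\<Sum>b = 1..nat \<lfloor>log (real p) (real n)\<rfloor>.
       \<Sum>a = 1..n div p ^ b.
         let d = n mod (a * p ^ b) in
         int (totient (a * p ^ b)) * (int (n div (a * p ^ b)) - 1)
         + (\<Sum>j \<in> {j. j dvd a * p}. moebius j * int (d div j)))"
  proof (rule sum.cong[OF refl], rule sum.cong[OF refl])
    fix b a assume b: "b \<in> {1..nat \<lfloor>log (real p) (real n)\<rfloor>}" and a: "a \<in> {1..n div p ^ b}"
    have ppos: "p ^ b > 0" using assms(1) by (simp add: prime_gt_0_nat)
    have "a * p ^ b \<le> n" using a ppos by (simp add: less_eq_div_iff_mult_less_eq)
    moreover have "a \<ge> 1" "b \<ge> 1" using a b by auto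
    ultimately show "int (card {k. a * p ^ b \<le> k \<and> k \<le> n \<and> coprime (a * p ^ b) k}) =
         (let d = n mod (a * p ^ b) in
         int (totient (a * p ^ b)) * (int (n div (a * p ^ b)) - 1)
         + (\<Sum>j \<in> {j. j dvd a * p}. moebius j * int (d div j)))"
      using term_count[OF assms(1)] by blast
  qed
  finally show ?thesis .
qed

end
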